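(* Define the set of dominant eigenvalues of $J_T$ as $\Lambda_D = \{\lambda_i[J_T] \mid \Re(\lambda_i[W_{\mathrm{out}}W_{\mathrm{in}}])>0\}$. If $\Lambda_D\neq\emptyset$, then the trained reservoir admits a $|\Lambda_D|$-dominant subspace with rate $\lambda = 1-\omega-\varepsilon$, where $0\le\varepsilon<\Re(\mu_{\min})$ and $\mu_{\min}$ is the eigenvalue of $W_{\mathrm{out}}W_{\mathrm{in}}$ with smallest positive real part. Furthermore, $|\Lambda_D|\le d$.
   Context: Consider the untrained linear diagonal continuous-time reservoir $\dot{r}(t) = (-1 + \omega) r(t) + W_{\mathrm{in}} u(t) + \sigma_b \mathbf{1}_n$, with $r(t)\in\mathbb{R}^n$, $u(t)\in\mathbb{R}^d$, $d<n$, $W_{\mathrm{in}}\in\mathbb{R}^{n\times d}$ of full column rank, $\mathbf{1}_n\notin\operatorname{Im}W_{\mathrm{in}}$, $\omega<1$, $\sigma_b\in\mathbb{R}$. It is trained from $r(0)=0$ on generic, informative data: snapshots at equally spaced times form $U\in\mathbb{R}^{d\times m}$ (full row rank) and $R\in\mathbb{R}^{n\times m}$ (full row rank), and $W_{\mathrm{out}} = UR^{\dagger}$ (least squares; $\dagger$ the Moore–Penrose pseudoinverse). The trained closed-loop system is $\dot r = J_T r + \sigma_b\mathbf{1}_n$ with $J_T = (-1+\omega)I + W_{\mathrm{in}}W_{\mathrm{out}}$, assumed diagonalizable and invertible. Then $J_T$ has $n-\operatorname{rank}(W_{\mathrm{out}}W_{\mathrm{in}})\ge n-d$ eigenvalues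 equal to $-1+\omega$ and its remaining (shifted) eigenvalues are $-1+\omega+\lambda_i[W_{\mathrm{out}}W_{\mathrm{in}}]$ for the nonzero eigenvalues of $W_{\mathrm{out}}W_{\mathrm{in}}$. $p$-dominance: a linear system $\dot x = Ax$ is $p$-dominant with rate $\lambda\ge0$ if there is a symmetric matrix $P$ with inertia $(p,0,n-p)$ ($p$ negative, $0$ zero, $n-p$ positive eigenvalues) such that $A^\top P + PA \le -2\lambda P - \varepsilon I$ for some $\varepsilon\ge0$; for $\varepsilon>0$ this is equivalent to $A+\lambda I$ having $p$ eigenvalues with strictly positive real part and $n-p$ with strictly negative real part. *)

theory Defs
  imports "Jordan_Normal_Form.Jordan_Normal_Form" "Jordan_Normal_Form.DL_Rank"
begin

text \<open>Complexification of a real matrix (eigenvalues are taken over the complex numbers).\<close>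
definition cmat :: "real mat \<Rightarrow> complex mat" where
  "cmat A = map_mat complex_of_real A"

definition alg_mult :: "real mat \<Rightarrow> complex \<Rightarrow> nat" where
  "alg_mult A \<mu> = Polynomial.order \<mu> (char_poly (cmat A))"

definition pos_eigs :: "real mat \<Rightarrow> complex set" where
  "pos_eigs M = {\<mu>. eigenvalue (cmat M) \<mu> \<and> 0 < Re \<mu>}"

text \<open>The dominant eigenvalues of J_T = (-1+omega) I + W_in W_out, as a multiset
  (with algebraic multiplicity): lambda_i[J_T] = -1 + omega + lambda_i[W_out W_in]
  for those eigenvalues of M = W_out W_in with positive real part.\<close>
definition Lambda_D :: "real \<Rightarrow> real mat \<Rightarrow> complex multiset" where
  "Lambda_D \<omega> M = image_mset (\<lambda>\<mu>. complex_of_real (-1 + \<omega>) + \<mu>)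
      (\<Sum>\<mu>\<in>pos_eigs M. replicate_mset (alg_mult M \<mu>) \<mu>)"

definition inertia :: "real mat \<Rightarrow> nat \<times> nat \<times> nat" where
  "inertia P =
     ((\<Sum>x\<in>{x. eigenvalue P x \<and> x < 0}. Polynomial.order x (char_poly P)),
      (\<Sum>x\<in>{x. eigenvalue P x \<and> x = 0}. Polynomial.order x (char_poly P)),
      (\<Sum>x\<in>{x. eigenvalue P x \<and> 0 < x}. Polynomial.order x (char_poly P)))"

definition loewner_le :: "nat \<Rightarrow> real mat \<Rightarrow> real mat \<Rightarrow> bool" where
  "loewner_le n M N \<longleftrightarrow> M \<in> carrier_mat n n \<and> N \<in> carrier_mat n n \<and>
     (\<forall>x\<in>carrier_vec n. x \<bullet> (M *\<^sub>v x) \<le> x \<bullet> (N *\<^sub>v x))"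

definition p_dominant :: "nat \<Rightarrow> real mat \<Rightarrow> real \<Rightarrow> nat \<Rightarrow> bool" where
  "p_dominant n A rate p \<longleftrightarrow>
     (\<exists>P \<in> carrier_mat n n. transpose_mat P = P \<and> inertia P = (p, 0, n - p) \<and>
        (\<exists>\<epsilon>\<ge>0. loewner_le n (transpose_mat A * P + P * A)
                              ((- 2 * rate) \<cdot>\<^sub>m P - \<epsilon> \<cdot>\<^sub>m 1\<^sub>m n)))"

definition is_pinv :: "real mat \<Rightarrow> real mat \<Rightarrow> bool" where
  "is_pinv A X \<longleftrightarrow> X \<in> carrier_mat (dim_col A) (dim_row A) \<and>
     A * X * A = A \<and> X * A * X = X \<and>
     transpose_mat (A * X) = A * X \<and> transpose_mat (X * A) = X * A"

definition pinv :: "real mat \<Rightarrow> real mat" where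
  "pinv A = (THE X. is_pinv A X)"

definition diagonalizable :: "real mat \<Rightarrow> bool" where
  "diagonalizable A \<longleftrightarrow> (\<exists>D. diagonal_mat D \<and> similar_mat (cmat A) D)"

end

theory Submission
  imports Defs "Jordan_Normal_Form.Schur_Decomposition"
begin

lemma nonzero_orth:
  fixes fs :: "'a::field vec list"
  assumes len: "length fs < n" and fs: "set fs \<subseteq> carrier_vec n"
  shows "\<exists>z \<in> carrier_vec n. z \<noteq> 0\<^sub>v n \<and> (\<forall>f\<in>set fs. f \<bullet> z = 0)"
proof -
  define k where "k = length fs"
  define c where "c = (\<lambda>i. if i < k then fs ! i else 0\<^sub>v n)"
  define A where "A = mat\<^sub>r n n (\<lambda>i. if i = k then 0\<^sub>v n else c i)"
  have cc: "c \<in> {0 ..< n} \<rightarrow> carrier_vec n" unfolding c_def k_def by (auto intro: subsetD[OF fs nth_mem])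
  have A: "A \<in> carrier_mat n n" by (simp add: A_def)
  have "det A = 0" unfolding A_def by (rule det_row_0[OF _ cc], simp add: k_def len)
  then obtain z where z: "z \<in> carrier_vec n" "z \<noteq> 0\<^sub>v n" "A *\<^sub>v z = 0\<^sub>v n"
    using det_0_iff_vec_prod_zero_field[OF A] by auto
  have "f \<bullet> z = 0" if f: "f \<in> set fs" for f
  proof -
    from f obtain i where i: "i < k" "f = fs ! i" unfolding k_def by (auto simp: in_set_conv_nth)
    have ik: "i < n" using i len k_def by auto
    have fi: "fs ! i \<in> carrier_vec n" using i by (auto simp: k_def intro: subsetD[OF fs nth_mem])
    have rowA: "row A i = f" unfolding A_def using i ik cc fi
      by (subst row_mat_of_row_fun) (auto simp: c_def)
    have "(A *\<^sub>v z) $ i = 0" using z ik by simp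
    thus ?thesis using rowA A ik by simp
  qed
  thus ?thesis using z by blast
qed

lemma order_linear_factors:
  fixes as :: "'a::idom list"
  shows "Polynomial.order x (\<Prod>a\<leftarrow>as. [:- a, 1:]) = count_list as x"
proof (induction as)
  case Nil then show ?case by simp
next
  case (Cons a as)
  have nz: "(\<Prod>a\<leftarrow>as. [:- a, 1:]) \<noteq> 0"
    unfolding prod_list_zero_iff by auto
  have "Polynomial.order x ([:- a, 1:] * (\<Prod>a\<leftarrow>as. [:- a, 1:])) =
        Polynomial.order x [:- a, 1:] + Polynomial.order x (\<Prod>a\<leftarrow>as. [:- a, 1:])"
    by (rule order_mult) (metis nz mult_eq_0_iff pCons_eq_0_iff one_neq_zero)
  moreover have "Polynomial.order x [:- a, 1:] = (if x = a then 1 else 0)"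
  proof (cases "x = a")
    case True then show ?thesis using order_power_n_n[of a 1] by simp
  next
    case False then show ?thesis by (simp add: order_0I)
  qed
  ultimately show ?case using Cons by simp
qed

lemma count_list_filter: "Pr x \<Longrightarrow> count_list (filter Pr as) x = count_list as x"
  by (induction as) auto

lemma sum_order_linear_factors:
  fixes as :: "'a::idom list"
  shows "(\<Sum>x\<in>{x. x \<in> set as \<and> Pr x}. Polynomial.order x (\<Prod>a\<leftarrow>as. [:- a, 1:]))
         = length (filter Pr as)"
proof -
  have "(\<Sum>x\<in>{x. x \<in> set as \<and> Pr x}. Polynomial.order x (\<Prod>a\<leftarrow>as. [:- a, 1:]))
       = (\<Sum>x\<in>set (filter Pr as). count_list (filter Pr as) x)"
    by (rule sum.cong) (auto simp: order_linear_factors count_list_filter)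
  also have "\<dots> = length (filter Pr as)" by (rule sum_count_set) auto
  finally show ?thesis .
qed

lemma char_poly_matrix_mult:
  fixes A :: "'a::field mat"
  assumes A: "A \<in> carrier_mat n d" and B: "B \<in> carrier_mat d n"
  shows "char_poly_matrix (A * B) = [:0,1:] \<cdot>\<^sub>m 1\<^sub>m n - map_mat (\<lambda>a. [:a:]) A * map_mat (\<lambda>a. [:a:]) B"
proof -
  have neg: "map_mat (\<lambda>a. [:-a:]) (A*B) = - map_mat (\<lambda>a.[:a:]) (A*B)" by (intro eq_matI) auto
  have m: "map_mat (\<lambda>a. [:a:]) (A * B) = map_mat (\<lambda>a. [:a:]) A * map_mat (\<lambda>a. [:a:]) B"
    by (rule map_poly_mult(1)[OF A B])
  show ?thesis unfolding char_poly_matrix_def neg m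
    using A B by (intro eq_matI) auto
qed

lemma sylvester_char_poly:
  fixes A :: "'a::field mat"
  assumes A: "A \<in> carrier_mat n d" and B: "B \<in> carrier_mat d n"
  shows "[:0,1:] ^ d * char_poly (A * B) = [:0,1:] ^ n * char_poly (B * A)"
proof -
  define X :: "'a poly" where "X = [:0,1:]"
  define Ap where "Ap = map_mat (\<lambda>a. [:a:]) A"
  define Bp where "Bp = map_mat (\<lambda>a. [:a:]) B"
  have Ap: "Ap \<in> carrier_mat n d" and Bp: "Bp \<in> carrier_mat d n" using A B by (auto simp: Ap_def Bp_def)
  have cpAB: "char_poly (A * B) = det (X \<cdot>\<^sub>m 1\<^sub>m n - Ap * Bp)"
    unfolding char_poly_def char_poly_matrix_mult[OF A B] X_def Ap_def Bp_def ..
  have cpBA: "char_poly (B * A) = det (X \<cdot>\<^sub>m 1\<^sub>m d - Bp * Ap)"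
    unfolding char_poly_def char_poly_matrix_mult[OF B A] X_def Ap_def Bp_def ..
  define M0 where "M0 = four_block_mat (X \<cdot>\<^sub>m 1\<^sub>m n) Ap Bp (1\<^sub>m d)"
  define L1 where "L1 = four_block_mat (1\<^sub>m n) (-Ap) (0\<^sub>m d n) (X \<cdot>\<^sub>m 1\<^sub>m d)"
  define L2 where "L2 = four_block_mat (1\<^sub>m n) (0\<^sub>m n d) (-Bp) (X \<cdot>\<^sub>m 1\<^sub>m d)"
  have M0: "M0 \<in> carrier_mat (n+d) (n+d)" unfolding M0_def using Ap Bp by auto
  have L1: "L1 \<in> carrier_mat (n+d) (n+d)" unfolding L1_def using Ap Bp by auto
  have L2: "L2 \<in> carrier_mat (n+d) (n+d)" unfolding L2_def using Ap Bp by auto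
  have dX: "det (X \<cdot>\<^sub>m 1\<^sub>m k) = X ^ k" for k by simp
  have dL1: "det L1 = X ^ d" unfolding L1_def
    by (subst det_four_block_mat_lower_left_zero[of _ n _ d]) (use Ap in auto)
  have dL2: "det L2 = X ^ d" unfolding L2_def
    by (subst det_four_block_mat_upper_right_zero[of _ n _ d]) (use Bp in auto)
  have P1: "L1 * M0 = four_block_mat (X \<cdot>\<^sub>m 1\<^sub>m n - Ap * Bp) (0\<^sub>m n d) (X \<cdot>\<^sub>m Bp) (X \<cdot>\<^sub>m 1\<^sub>m d)"
    unfolding L1_def M0_def
    apply (subst mult_four_block_mat[OF one_carrier_mat uminus_carrier_mat[OF Ap] zero_carrier_mat smult_carrier_mat[OF one_carrier_mat]
       smult_carrier_mat[OF one_carrier_mat] Ap Bp one_carrier_mat])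
    using Ap Bp apply (auto simp: mult_smult_distrib mult_smult_assoc_mat)
    done
  have P2: "L2 * M0 = four_block_mat (X \<cdot>\<^sub>m 1\<^sub>m n) Ap (0\<^sub>m d n) (X \<cdot>\<^sub>m 1\<^sub>m d - Bp * Ap)"
    unfolding L2_def M0_def
    apply (subst mult_four_block_mat[OF one_carrier_mat zero_carrier_mat uminus_carrier_mat[OF Bp] smult_carrier_mat[OF one_carrier_mat]
       smult_carrier_mat[OF one_carrier_mat] Ap Bp one_carrier_mat])
    using Ap Bp apply (auto simp: mult_smult_distrib mult_smult_assoc_mat)
    done
  have "det L1 * det M0 = det (X \<cdot>\<^sub>m 1\<^sub>m n - Ap * Bp) * det (X \<cdot>\<^sub>m 1\<^sub>m d)"
    unfolding det_mult[OF L1 M0, symmetric] P1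
    by (subst det_four_block_mat_upper_right_zero[of _ n _ d]) (use Ap Bp in auto)
  hence e1: "det M0 = char_poly (A * B)" unfolding cpAB dL1 dX by (simp add: mult.commute X_def)
  have "det L2 * det M0 = det (X \<cdot>\<^sub>m 1\<^sub>m n) * det (X \<cdot>\<^sub>m 1\<^sub>m d - Bp * Ap)"
    unfolding det_mult[OF L2 M0, symmetric] P2
    by (subst det_four_block_mat_lower_left_zero[of _ n _ d]) (use Ap Bp in auto)
  thus ?thesis unfolding e1 cpBA dL2 X_def by simp
qed

lemma real_sym_eigen:
  fixes A :: "real mat"
  assumes A: "A \<in> carrier_mat n n" and sym: "transpose_mat A = A" and n: "n > 0"
  shows "\<exists>e v. v \<in> carrier_vec n \<and> v \<noteq> 0\<^sub>v n \<and> A *\<^sub>v v = e \<cdot>\<^sub>v v"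
proof -
  let ?C = "map_mat complex_of_real A"
  have C: "?C \<in> carrier_mat n n" using A by simp
  obtain as where cp: "char_poly ?C = (\<Prod>a\<leftarrow>as. [:- a, 1:])" and len: "length as = n"
    using char_poly_factorized[OF C] by auto
  define \<mu> where "\<mu> = hd as"
  have "\<mu> \<in> set as" using len n unfolding \<mu>_def by (cases as) auto
  hence "poly (char_poly ?C) \<mu> = 0" unfolding cp by (simp add: poly_prod_list_zero_iff)
  hence "eigenvalue ?C \<mu>" using eigenvalue_root_char_poly[OF C] by simp
  then obtain w where w: "eigenvector ?C w \<mu>" unfolding eigenvalue_def by auto
  hence wc: "w \<in> carrier_vec n" and w0: "w \<noteq> 0\<^sub>v n" and ew: "?C *\<^sub>v w = \<mu> \<cdot>\<^sub>v w"
    unfolding eigenvector_def using C by auto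
  define s where "s = (\<Sum>i<n. cnj (w$i) * (?C *\<^sub>v w) $ i)"
  have s1: "s = \<mu> * (\<Sum>i<n. cnj (w$i) * w$i)" unfolding s_def ew using wc
    by (simp add: sum_distrib_left mult_ac)
  have s2: "s = (\<Sum>i<n. \<Sum>j<n. cnj (w$i) * of_real (A$$(i,j)) * w$j)"
    unfolding s_def using wc A by (simp add: scalar_prod_def sum_distrib_left mult_ac lessThan_atLeast0)
  have "cnj s = (\<Sum>i<n. \<Sum>j<n. w$i * of_real (A$$(i,j)) * cnj (w$j))" unfolding s2 by simp
  also have "\<dots> = (\<Sum>j<n. \<Sum>i<n. w$i * of_real (A$$(i,j)) * cnj (w$j))" by (rule sum.swap)
  also have "\<dots> = s" unfolding s2
  proof (intro sum.cong refl)
    fix i j assume "i \<in> {..<n}" "j \<in> {..<n}"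
    hence "A $$ (j, i) = A $$ (i, j)" using sym A
      by (metis carrier_matD index_transpose_mat(1) lessThan_iff)
    thus "w $ j * complex_of_real (A $$ (j, i)) * cnj (w $ i) = cnj (w $ i) * complex_of_real (A $$ (i, j)) * w $ j"
      by (simp add: mult_ac)
  qed
  finally have "cnj s = s" .
  hence Ims: "Im s = 0" by (metis complex_cnj_cancel_iff Reals_cnj_iff complex_is_Real_iff)
  define N where "N = (\<Sum>i<n. (cmod (w$i))^2)"
  have N: "(\<Sum>i<n. cnj (w$i) * w$i) = of_real N" unfolding N_def of_real_sum of_real_power
  proof (intro sum.cong refl)
    fix i show "cnj (w$i) * w$i = (of_real (cmod (w$i)))^2"
      by (subst of_real_power[symmetric], subst complex_norm_square, simp add: mult.commute)
  qed
  obtain i where i: "i < n" "w $ i \<noteq> 0" using w0 wc by (metis eq_vecI carrier_vecD index_zero_vec)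
  have "N > 0" unfolding N_def
    by (rule sum_pos2[of _ i]) (use i in auto)
  have "Im \<mu> = 0" using Ims unfolding s1 N using \<open>N > 0\<close> by simp
  hence mu: "\<mu> = of_real (Re \<mu>)" by (simp add: complex_eq_iff)
  have "char_poly ?C = map_poly of_real (char_poly A)" by (rule of_real_hom.char_poly_hom[OF A])
  hence "of_real (poly (char_poly A) (Re \<mu>)) = (0::complex)"
    using \<open>poly (char_poly ?C) \<mu> = 0\<close> mu by (metis of_real_hom.poly_map_poly)
  hence "poly (char_poly A) (Re \<mu>) = 0" by simp
  hence "eigenvalue A (Re \<mu>)" using eigenvalue_root_char_poly[OF A] by simp
  then obtain v where "eigenvector A v (Re \<mu>)" unfolding eigenvalue_def by auto
  thus ?thesis unfolding eigenvector_def using A by auto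
qed

lemma spectral_sym:
  fixes A :: "real mat"
  assumes "A \<in> carrier_mat n n" "transpose_mat A = A"
  shows "\<exists>Q L. Q \<in> carrier_mat n n \<and> L \<in> carrier_mat n n \<and> diagonal_mat L \<and>
     transpose_mat Q * Q = 1\<^sub>m n \<and> Q * transpose_mat Q = 1\<^sub>m n \<and> A = Q * L * transpose_mat Q"
  using assms
proof (induction n arbitrary: A)
  case 0
  then show ?case
    by (intro exI[of _ "1\<^sub>m 0"] exI[of _ A]) (auto simp: diagonal_mat_def)
next
  case (Suc m A)
  define n where "n = Suc m"
  have A: "A \<in> carrier_mat n n" and sym: "transpose_mat A = A" using Suc.prems n_def by auto
  obtain e v where v: "v \<in> carrier_vec n" "v \<noteq> 0\<^sub>v n" "A *\<^sub>v v = e \<cdot>\<^sub>v v"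
    using real_sym_eigen[OF A sym] n_def by auto
  have vv: "v \<bullet> v > 0" using conjugate_square_greater_0_vec[OF v(1)] v(2) by simp
  define u where "u = (1 / sqrt (v \<bullet> v)) \<cdot>\<^sub>v v"
  have u: "u \<in> carrier_vec n" unfolding u_def using v by simp
  have uu: "u \<bullet> u = 1" unfolding u_def using v vv
    by (simp add: smult_scalar_prod_distrib[OF _ v(1)] scalar_prod_smult_distrib[OF v(1)] power2_eq_square[symmetric])
  have u0: "u \<noteq> 0\<^sub>v n" using uu u by auto
  have Au: "A *\<^sub>v u = e \<cdot>\<^sub>v u" unfolding u_def using v A
    by (simp add: mult_mat_vec[OF A] smult_smult_assoc mult.commute)
  interpret cof_vec_space n "TYPE(real)" .
  define b where "b = basis_completion u"
  note bc = basis_completion[OF u u0, folded b_def]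
  from bc have len_b: "length b = n" and hdb: "hd b = u" by auto
  from hdb len_b obtain vs where bv: "b = u # vs" unfolding n_def by (cases b, auto)
  define ws where "ws = gram_schmidt n b"
  from gram_schmidt_result[OF bc(2) bc(4) bc(5) ws_def]
  have ws: "set ws \<subseteq> carrier_vec n" "corthogonal ws" "length ws = n" by (auto simp: len_b)
  have hdws: "hd ws = u" unfolding ws_def bv using gram_schmidt_hd[OF u] by simp
  have wsi: "ws ! i \<in> carrier_vec n" if "i < n" for i using ws that by auto
  have wpos: "ws ! i \<bullet> ws ! i > 0" if i: "i < n" for i
  proof -
    have "ws ! i \<bullet>c ws ! i \<noteq> 0" using corthogonalD[OF ws(2), of i i] i ws(3) by auto
    hence "ws ! i \<noteq> 0\<^sub>v n" using wsi[OF i] by auto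
    thus ?thesis using conjugate_square_greater_0_vec[OF wsi[OF i]] by simp
  qed
  have worth: "ws ! i \<bullet> ws ! j = 0" if "i < n" "j < n" "i \<noteq> j" for i j
    using corthogonalD[OF ws(2), of i j] that ws(3) by simp
  define us where "us = map (\<lambda>w. (1 / sqrt (w \<bullet> w)) \<cdot>\<^sub>v w) ws"
  have lus: "length us = n" unfolding us_def using ws by simp
  have usi: "us ! i = (1 / sqrt (ws ! i \<bullet> ws ! i)) \<cdot>\<^sub>v ws ! i" if "i < n" for i
    unfolding us_def using that ws(3) by simp
  have usc: "us ! i \<in> carrier_vec n" if "i < n" for i using usi[OF that] wsi[OF that] by simp
  have usus: "us ! i \<bullet> us ! j = (if i = j then 1 else 0)" if i: "i < n" and j: "j < n" for i j
  proof -
    have "us ! i \<bullet> us ! j = (1 / sqrt (ws ! i \<bullet> ws ! i)) * (1 / sqrt (ws ! j \<bullet> ws ! j)) * (ws ! i \<bullet> ws ! j)"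
      unfolding usi[OF i] usi[OF j]
      by (simp add: smult_scalar_prod_distrib[OF wsi[OF i] ] scalar_prod_smult_distrib[OF _ wsi[OF j]] wsi i j)
    thus ?thesis using worth[OF i j] wpos[OF i] 
      by (auto simp: power2_eq_square[symmetric])
  qed
  have us0: "us ! 0 = u"
  proof -
    have "ws ! 0 = u" using hdws ws(3) n_def by (cases ws) auto
    thus ?thesis using usi[of 0] n_def uu by simp
  qed
  define U where "U = mat_of_cols n us"
  have U: "U \<in> carrier_mat n n" unfolding U_def using mat_of_cols_carrier(1)[of n us] lus by simp
  have colU: "col U i = us ! i" if "i < n" for i
    unfolding U_def using that lus usc by (simp add: col_mat_of_cols)
  have UTU: "transpose_mat U * U = 1\<^sub>m n"
    by (rule eq_matI) (use U in \<open>auto simp: colU usus\<close>)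
  have UUT: "U * transpose_mat U = 1\<^sub>m n"
    by (rule mat_mult_left_right_inverse[OF _ U UTU]) (use U in simp)
  define A' where "A' = transpose_mat U * A * U"
  have A': "A' \<in> carrier_mat n n" unfolding A'_def using U A by auto
  have symA': "transpose_mat A' = A'" unfolding A'_def
    using U A sym by (simp add: transpose_mult[of _ n n _ n] assoc_mult_mat[of _ n n _ n _ n])
  have A'i0: "A' $$ (i, 0) = (if i = 0 then e else 0)" if i: "i < n" for i
  proof -
    have "A' = transpose_mat U * (A * U)" unfolding A'_def using U A by auto
    hence "A' $$ (i, 0) = row (transpose_mat U) i \<bullet> col (A * U) 0"
      using U A i n_def by simp
    also have "col (A * U) 0 = A *\<^sub>v col U 0" by (rule col_mult2[OF A U]) (simp add: n_def)
    also have "\<dots> = e \<cdot>\<^sub>v u" using colU[of 0] us0 Au n_def by simp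
    also have "row (transpose_mat U) i = us ! i" using U i colU by simp
    also have "us ! i \<bullet> (e \<cdot>\<^sub>v u) = e * (us ! i \<bullet> us ! 0)"
      using usc[OF i] u us0 by (simp add: scalar_prod_smult_distrib)
    finally show ?thesis using usus[OF i, of 0] n_def by simp
  qed
  have A'0j: "A' $$ (0, j) = (if j = 0 then e else 0)" if j: "j < n" for j
  proof -
    have "A' $$ (0, j) = transpose_mat A' $$ (j, 0)" using A' j n_def by simp
    thus ?thesis using symA' A'i0[OF j] by simp
  qed
  define A3 where "A3 = mat m m (\<lambda>(i,j). A' $$ (Suc i, Suc j))"
  have A3: "A3 \<in> carrier_mat m m" unfolding A3_def by simp
  have symA3: "transpose_mat A3 = A3"
  proof (rule eq_matI)
    fix i j assume "i < dim_row A3" "j < dim_col A3"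
    hence "i < m" "j < m" using A3 by auto
    thus "transpose_mat A3 $$ (i, j) = A3 $$ (i, j)" unfolding A3_def
      using arg_cong[OF symA', of "\<lambda>M. M $$ (Suc j, Suc i)"] A' n_def by simp
  qed (use A3 in auto)
  define E where "E = mat 1 1 (\<lambda>_. e)"
  have E: "E \<in> carrier_mat 1 1" unfolding E_def by simp
  have A'blk: "A' = four_block_mat E (0\<^sub>m 1 m) (0\<^sub>m m 1) A3"
  proof (rule eq_matI)
    fix i j assume ij: "i < dim_row (four_block_mat E (0\<^sub>m 1 m) (0\<^sub>m m 1) A3)"
      "j < dim_col (four_block_mat E (0\<^sub>m 1 m) (0\<^sub>m m 1) A3)"
    hence i: "i < n" and j: "j < n" using E A3 n_def by auto
    show "A' $$ (i, j) = four_block_mat E (0\<^sub>m 1 m) (0\<^sub>m m 1) A3 $$ (i, j)"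
    proof (cases "i = 0")
      case True thus ?thesis using A'0j[OF j] ij E A3 by (simp add: E_def)
    next
      case False
      show ?thesis
      proof (cases "j = 0")
        case True thus ?thesis using A'i0[OF i] ij E A3 False by (simp add: E_def)
      next
        case False2: False
        then obtain i' j' where "i = Suc i'" "j = Suc j'" using False by (cases i; cases j) auto
        thus ?thesis using ij E A3 i j n_def by (simp add: A3_def)
      qed
    qed
  qed (use A' E A3 n_def in auto)
  obtain Q3 L3 where Q3: "Q3 \<in> carrier_mat m m" and L3: "L3 \<in> carrier_mat m m" and dL3: "diagonal_mat L3"
    and Q3TQ3: "transpose_mat Q3 * Q3 = 1\<^sub>m m" and Q3Q3T: "Q3 * transpose_mat Q3 = 1\<^sub>m m"
    and A3eq: "A3 = Q3 * L3 * transpose_mat Q3"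
    using Suc.IH[OF A3 symA3] by blast
  define F where "F = four_block_mat (1\<^sub>m 1) (0\<^sub>m 1 m) (0\<^sub>m m 1) Q3"
  define L where "L = four_block_mat E (0\<^sub>m 1 m) (0\<^sub>m m 1) L3"
  have F: "F \<in> carrier_mat n n" unfolding F_def using Q3 n_def by auto
  have L: "L \<in> carrier_mat n n" unfolding L_def using L3 E n_def by auto
  have FT: "transpose_mat F = four_block_mat (1\<^sub>m 1) (0\<^sub>m 1 m) (0\<^sub>m m 1) (transpose_mat Q3)"
    unfolding F_def by (subst transpose_four_block_mat) (use Q3 in auto)
  have dL: "diagonal_mat L"
    using dL3 L3 E unfolding L_def diagonal_mat_def E_def by auto
  have FTF: "transpose_mat F * F = 1\<^sub>m n" unfolding FT unfolding F_def
    by (subst mult_four_block_mat[of _ 1 1 _ m _ m _ _ 1 _ m]) (use Q3 Q3TQ3 n_def in auto)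
  have FFT: "F * transpose_mat F = 1\<^sub>m n" unfolding FT unfolding F_def
    by (subst mult_four_block_mat[of _ 1 1 _ m _ m _ _ 1 _ m]) (use Q3 Q3Q3T n_def in auto)
  have FLFT: "F * L * transpose_mat F = A'"
  proof -
    have "F * L = four_block_mat E (0\<^sub>m 1 m) (0\<^sub>m m 1) (Q3 * L3)"
      unfolding F_def L_def
      by (subst mult_four_block_mat[of _ 1 1 _ m _ m _ _ 1 _ m]) (use Q3 L3 E in auto)
    also have "\<dots> * transpose_mat F = four_block_mat E (0\<^sub>m 1 m) (0\<^sub>m m 1) (Q3 * L3 * transpose_mat Q3)"
      unfolding FT
      by (subst mult_four_block_mat[of _ 1 1 _ m _ m _ _ 1 _ m]) (use Q3 L3 E in auto)
    finally show ?thesis unfolding A'blk A3eq .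
  qed
  have Q: "U * F \<in> carrier_mat n n" using U F by auto
  have QT: "transpose_mat (U * F) = transpose_mat F * transpose_mat U"
    by (rule transpose_mult[OF U F])
  have "transpose_mat (U * F) * (U * F) = transpose_mat F * (transpose_mat U * U) * F"
    unfolding QT using U F by (simp add: assoc_mult_mat[of _ n n _ n _ n])
  hence QTQ: "transpose_mat (U * F) * (U * F) = 1\<^sub>m n" using UTU FTF F by simp
  have "(U * F) * transpose_mat (U * F) = U * (F * transpose_mat F) * transpose_mat U"
    unfolding QT using U F by (simp add: assoc_mult_mat[of _ n n _ n _ n])
  hence QQT: "(U * F) * transpose_mat (U * F) = 1\<^sub>m n" using UUT FFT U by simp
  have "(U * F) * L * transpose_mat (U * F) = U * (F * L * transpose_mat F) * transpose_mat U"
    unfolding QT using U F L by (simp add: assoc_mult_mat[of _ n n _ n _ n])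
  also have "\<dots> = (U * transpose_mat U) * A * (U * transpose_mat U)"
    unfolding FLFT A'_def using U A by (simp add: assoc_mult_mat[of _ n n _ n _ n])
  also have "\<dots> = A" using UUT A by simp
  finally have "A = (U * F) * L * transpose_mat (U * F)" by simp
  thus ?case using Q L dL QTQ QQT n_def by metis
qed

lemma GB:
  fixes a :: "nat \<Rightarrow> nat \<Rightarrow> complex" and c :: "nat \<Rightarrow> complex"
  shows "(\<Sum>i<n. \<Sum>j<n. cnj (z i) * (\<Sum>k<N. cnj (a k i) * c k * a k j) * w j)
       = (\<Sum>k<N. c k * cnj (\<Sum>i<n. a k i * z i) * (\<Sum>j<n. a k j * w j))"
proof -
  have "(\<Sum>i<n. \<Sum>j<n. cnj (z i) * (\<Sum>k<N. cnj (a k i) * c k * a k j) * w j)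
      = (\<Sum>i<n. \<Sum>j<n. \<Sum>k<N. c k * (cnj (a k i) * cnj (z i)) * (a k j * w j))"
    by (simp add: sum_distrib_left sum_distrib_right mult_ac)
  also have "\<dots> = (\<Sum>i<n. \<Sum>k<N. \<Sum>j<n. c k * (cnj (a k i) * cnj (z i)) * (a k j * w j))"
    by (simp add: sum.swap[of _ "{..<n}" "{..<N}"])
  also have "\<dots> = (\<Sum>k<N. \<Sum>i<n. \<Sum>j<n. c k * (cnj (a k i) * cnj (z i)) * (a k j * w j))"
    by (rule sum.swap)
  also have "\<dots> = (\<Sum>k<N. c k * cnj (\<Sum>i<n. a k i * z i) * (\<Sum>j<n. a k j * w j))"
    by (simp add: sum_distrib_left sum_distrib_right mult_ac)
  finally show ?thesis .
qed

lemma entry_mult: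
  fixes A B :: "'a::comm_ring_1 mat"
  assumes "A \<in> carrier_mat n m" "B \<in> carrier_mat m k" "i < n" "j < k"
  shows "(A * B) $$ (i, j) = (\<Sum>l<m. A $$ (i, l) * B $$ (l, j))"
  using assms by (simp add: scalar_prod_def lessThan_atLeast0)

lemma entry_mult_vec:
  fixes A :: "'a::comm_ring_1 mat"
  assumes "A \<in> carrier_mat n m" "v \<in> carrier_vec m" "i < n"
  shows "(A *\<^sub>v v) $ i = (\<Sum>l<m. A $$ (i, l) * v $ l)"
  using assms by (simp add: scalar_prod_def lessThan_atLeast0)

lemma scalar_prod_sum:
  fixes v w :: "'a::comm_ring_1 vec"
  assumes "v \<in> carrier_vec n" "w \<in> carrier_vec n"
  shows "v \<bullet> w = (\<Sum>i<n. v $ i * w $ i)"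
  using assms by (simp add: scalar_prod_def lessThan_atLeast0)

lemma Re_mult_of_real_left: "Re (complex_of_real r * z) = r * Re z" by simp

lemma main_part1:
  fixes K :: "real mat" and S Y :: "complex mat" and dk :: "nat \<Rightarrow> complex" and \<epsilon> :: real
  assumes K: "K \<in> carrier_mat n n" and S: "S \<in> carrier_mat n n" and Y: "Y \<in> carrier_mat n n"
    and SY: "S * Y = 1\<^sub>m n" and YS: "Y * S = 1\<^sub>m n"
    and KSY: "map_mat complex_of_real K = S * mat_diag n dk * Y"
    and eps0: "0 \<le> \<epsilon>" and epos: "\<And>k. k < n \<Longrightarrow> Re (dk k) > 0 \<Longrightarrow> Re (dk k) > \<epsilon>"
  defines "g \<equiv> \<lambda>k. if Re (dk k) > 0 then -1 else (1::real)"
  defines "P \<equiv> mat n n (\<lambda>(i,j). Re (\<Sum>k<n. cnj (Y $$ (k,i)) * of_real (g k) * Y $$ (k,j)))"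
  shows "P \<in> carrier_mat n n" "transpose_mat P = P"
    "\<And>x. x \<in> carrier_vec n \<Longrightarrow> x \<bullet> (P *\<^sub>v (K *\<^sub>v x - \<epsilon> \<cdot>\<^sub>v x)) \<le> 0"
proof -
  let ?cK = "map_mat complex_of_real K"
  define h where "h = (\<lambda>i j. \<Sum>k<n. cnj (Y $$ (k,i)) * of_real (g k) * Y $$ (k,j))"
  have Pij: "P $$ (i,j) = Re (h i j)" if "i < n" "j < n" for i j
    using that unfolding P_def h_def by simp
  show P: "P \<in> carrier_mat n n" unfolding P_def by simp
  have hsym: "cnj (h i j) = h j i" for i j unfolding h_def by (simp add: mult_ac)
  show "transpose_mat P = P"
  proof (rule eq_matI)
    fix i j assume "i < dim_row P" "j < dim_col P"
    hence ij: "i < n" "j < n" using P by auto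
    have "Re (h j i) = Re (h i j)" using arg_cong[OF hsym[of i j], of Re] by simp
    thus "transpose_mat P $$ (i, j) = P $$ (i, j)" using ij P Pij by simp
  qed (use P in auto)
  have YK: "Y * ?cK = mat_diag n dk * Y"
  proof -
    have "Y * ?cK = (Y * S) * mat_diag n dk * Y" unfolding KSY using Y S
      by (simp add: assoc_mult_mat[of _ n n _ n _ n])
    thus ?thesis using YS Y by (simp add: left_mult_one_mat[of _ n n])
  qed
  have YKe: "(\<Sum>j<n. Y $$ (k, j) * of_real (K $$ (j, l))) = dk k * Y $$ (k, l)" if "k < n" "l < n" for k l
  proof -
    have "(Y * ?cK) $$ (k, l) = (\<Sum>j<n. Y $$ (k, j) * of_real (K $$ (j, l)))"
      using entry_mult[of Y n n ?cK n k l] that Y K by simp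
    moreover have "(Y * ?cK) $$ (k, l) = dk k * Y $$ (k, l)" unfolding YK using mat_diag_mult_left[OF Y] that by simp
    ultimately show ?thesis by simp
  qed
  show "x \<bullet> (P *\<^sub>v (K *\<^sub>v x - \<epsilon> \<cdot>\<^sub>v x)) \<le> 0" if x: "x \<in> carrier_vec n" for x
  proof -
    define w where "w = K *\<^sub>v x - \<epsilon> \<cdot>\<^sub>v x"
    have w: "w \<in> carrier_vec n" unfolding w_def using K x by simp
    have wj: "w $ j = (\<Sum>l<n. K $$ (j, l) * x $ l) - \<epsilon> * x $ j" if "j < n" for j
      unfolding w_def using that K x entry_mult_vec[OF K x that] by simp
    define yx where "yx = (\<lambda>k. \<Sum>j<n. Y $$ (k,j) * of_real (x $ j))"
    have yw: "(\<Sum>j<n. Y $$ (k,j) * of_real (w $ j)) = (dk k - of_real \<epsilon>) * yx k" if k: "k < n" for k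
    proof -
      have "(\<Sum>j<n. Y $$ (k,j) * of_real (w $ j))
          = (\<Sum>j<n. \<Sum>l<n. Y $$ (k,j) * of_real (K $$ (j, l)) * of_real (x $ l)) - of_real \<epsilon> * yx k"
        by (simp add: wj yx_def sum_distrib_left sum_subtractf algebra_simps)
      also have "(\<Sum>j<n. \<Sum>l<n. Y $$ (k,j) * of_real (K $$ (j, l)) * of_real (x $ l))
          = (\<Sum>l<n. (\<Sum>j<n. Y $$ (k,j) * of_real (K $$ (j, l))) * of_real (x $ l))"
        by (subst sum.swap) (simp add: sum_distrib_right)
      also have "\<dots> = dk k * yx k" using YKe[OF k]
        by (simp add: yx_def sum_distrib_left mult_ac)
      finally show ?thesis by (simp add: algebra_simps)
    qed
    have "x \<bullet> (P *\<^sub>v w) = (\<Sum>i<n. x $ i * (\<Sum>j<n. P $$ (i, j) * w $ j))"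
      using scalar_prod_sum[OF x, of "P *\<^sub>v w"] entry_mult_vec[OF P w] P w by (simp del: index_mult_mat_vec)
    also have "\<dots> = Re (\<Sum>i<n. \<Sum>j<n. cnj (of_real (x $ i)) * h i j * of_real (w $ j))"
      by (simp add: Pij sum_distrib_left Re_sum mult_ac)
    also have "\<dots> = Re (\<Sum>k<n. of_real (g k) * cnj (yx k) * (\<Sum>j<n. Y $$ (k,j) * of_real (w $ j)))"
      unfolding h_def yx_def by (rule arg_cong[where f=Re], rule GB)
    also have "\<dots> = Re (\<Sum>k<n. of_real (g k) * cnj (yx k) * ((dk k - of_real \<epsilon>) * yx k))"
      by (intro arg_cong[where f=Re] sum.cong refl) (simp add: yw)
    also have "\<dots> = (\<Sum>k<n. g k * (Re (dk k) - \<epsilon>) * (cmod (yx k))^2)"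
      unfolding Re_sum
    proof (rule sum.cong[OF refl])
      fix k
      have e: "cnj (yx k) * yx k = of_real ((cmod (yx k))^2)"
        by (subst complex_norm_square) (simp add: mult.commute)
      have "of_real (g k) * cnj (yx k) * ((dk k - of_real \<epsilon>) * yx k)
          = of_real (g k) * (dk k - of_real \<epsilon>) * (cnj (yx k) * yx k)" by (simp only: mult_ac)
      also have "\<dots> = of_real (g k * (cmod (yx k))^2) * (dk k - of_real \<epsilon>)"
        unfolding e by (simp only: of_real_mult mult_ac)
      finally have E: "of_real (g k) * cnj (yx k) * ((dk k - of_real \<epsilon>) * yx k)
          = of_real (g k * (cmod (yx k))^2) * (dk k - of_real \<epsilon>)" .
      show "Re (of_real (g k) * cnj (yx k) * ((dk k - of_real \<epsilon>) * yx k))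
          = g k * (Re (dk k) - \<epsilon>) * (cmod (yx k))^2" unfolding E
        by (simp only: Re_mult_of_real_left) (simp add: mult_ac)
    qed
    also have "\<dots> \<le> 0"
    proof (rule sum_nonpos)
      fix k assume "k \<in> {..<n}"
      hence k: "k < n" by simp
      have "g k * (Re (dk k) - \<epsilon>) \<le> 0"
        using epos[OF k] eps0 unfolding g_def by auto
      thus "g k * (Re (dk k) - \<epsilon>) * (cmod (yx k))^2 \<le> 0"
        by (simp add: mult_nonpos_nonneg)
    qed
    finally show ?thesis unfolding w_def .
  qed
qed

lemma cmod_sq: "cnj z * z = complex_of_real ((cmod z)^2)"
  by (subst complex_norm_square) (simp add: mult.commute)

lemma conj_argument:
  fixes K :: "real mat" and S Y :: "complex mat" and dk :: "nat \<Rightarrow> complex" and \<Phi> :: "real \<Rightarrow> bool"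
  assumes K: "K \<in> carrier_mat n n" and S: "S \<in> carrier_mat n n" and Y: "Y \<in> carrier_mat n n"
    and SY: "S * Y = 1\<^sub>m n" and YS: "Y * S = 1\<^sub>m n"
    and KSY: "map_mat complex_of_real K = S * mat_diag n dk * Y"
    and z: "z \<in> carrier_vec n"
    and van: "\<And>l. l < n \<Longrightarrow> \<Phi> (Re (dk l)) \<Longrightarrow> (Y *\<^sub>v z) $ l = 0"
    and k: "k < n" "\<Phi> (Re (dk k))"
  shows "(map_mat cnj Y *\<^sub>v z) $ k = 0"
proof -
  let ?cK = "map_mat complex_of_real K"
  let ?Yc = "map_mat cnj Y"
  let ?D = "mat_diag n dk"
  have cK: "?cK \<in> carrier_mat n n" using K by simp
  have Yc: "?Yc \<in> carrier_mat n n" using Y by simp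
  have YK: "Y * ?cK = ?D * Y"
  proof -
    have "Y * ?cK = (Y * S) * ?D * Y" unfolding KSY using Y S
      by (simp add: assoc_mult_mat[of _ n n _ n _ n])
    thus ?thesis using YS Y by (simp add: left_mult_one_mat[of _ n n])
  qed
  have KS: "?cK * S = S * ?D"
  proof -
    have DY: "?D * Y \<in> carrier_mat n n" using mult_carrier_mat[OF mat_diag_dim Y] .
    have "?cK * S = S * ?D * (Y * S)" unfolding KSY using Y S DY
      by (simp add: assoc_mult_mat[of _ n n _ n _ n])
    thus ?thesis using YS S by (simp add: right_mult_one_mat[of _ n n])
  qed
  have YcK: "?Yc * ?cK = mat_diag n (\<lambda>i. cnj (dk i)) * ?Yc"
  proof (rule eq_matI)
    fix i j assume "i < dim_row (mat_diag n (\<lambda>i. cnj (dk i)) * ?Yc)" "j < dim_col (mat_diag n (\<lambda>i. cnj (dk i)) * ?Yc)"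
    hence ij: "i < n" "j < n" using Y by (auto simp: mat_diag_def)
    have e1: "(?Yc * ?cK) $$ (i,j) = (\<Sum>l<n. ?Yc $$ (i,l) * ?cK $$ (l,j))"
      by (rule entry_mult[OF Yc cK ij])
    have e2: "(Y * ?cK) $$ (i,j) = (\<Sum>l<n. Y $$ (i,l) * ?cK $$ (l,j))"
      by (rule entry_mult[OF Y cK ij])
    have "(?Yc * ?cK) $$ (i,j) = cnj ((Y * ?cK) $$ (i,j))"
      unfolding e1 e2 using ij Y K by simp
    also have "\<dots> = cnj (dk i * Y $$ (i,j))" unfolding YK using mat_diag_mult_left[OF Y] ij by simp
    also have "\<dots> = (mat_diag n (\<lambda>i. cnj (dk i)) * ?Yc) $$ (i,j)"
      using mat_diag_mult_left[OF Yc] ij Y by simp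
    finally show "(?Yc * ?cK) $$ (i,j) = (mat_diag n (\<lambda>i. cnj (dk i)) * ?Yc) $$ (i,j)" .
  qed (use Y K in \<open>auto simp: mat_diag_def\<close>)
  define C where "C = ?Yc * S"
  have C: "C \<in> carrier_mat n n" unfolding C_def using Y S by simp
  have CD: "C * ?D = mat_diag n (\<lambda>i. cnj (dk i)) * C"
  proof -
    have "C * ?D = ?Yc * (S * ?D)" unfolding C_def by (rule assoc_mult_mat[OF Yc S mat_diag_dim])
    also have "\<dots> = (?Yc * ?cK) * S" unfolding KS[symmetric] by (rule assoc_mult_mat[OF Yc cK S, symmetric])
    also have "\<dots> = mat_diag n (\<lambda>i. cnj (dk i)) * C" unfolding YcK C_def by (rule assoc_mult_mat[OF mat_diag_dim Yc S])
    finally show ?thesis .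
  qed
  have Cprop: "C $$ (k, l) = 0 \<or> dk l = cnj (dk k)" if "l < n" for l
  proof -
    have "(C * ?D) $$ (k, l) = C $$ (k,l) * dk l" using mat_diag_mult_right[OF C] that k by simp
    moreover have "(mat_diag n (\<lambda>i. cnj (dk i)) * C) $$ (k, l) = cnj (dk k) * C $$ (k,l)"
      using mat_diag_mult_left[OF C] that k by simp
    ultimately have "C $$ (k,l) * dk l = C $$ (k,l) * cnj (dk k)" using CD by (metis mult.commute)
    thus ?thesis by (metis mult_left_cancel)
  qed
  have zSY: "z = S *\<^sub>v (Y *\<^sub>v z)" using S Y z SY by (simp add: assoc_mult_mat_vec[symmetric, of _ n n _ n])
  have "?Yc *\<^sub>v z = C *\<^sub>v (Y *\<^sub>v z)"
    by (subst zSY) (use Y S z in \<open>simp add: C_def assoc_mult_mat_vec[of _ n n _ n]\<close>)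
  hence "(?Yc *\<^sub>v z) $ k = (\<Sum>l<n. C $$ (k, l) * (Y *\<^sub>v z) $ l)"
    using entry_mult_vec[OF C _ k(1), of "Y *\<^sub>v z"] Y z by simp
  also have "\<dots> = 0"
  proof (rule sum.neutral, rule ballI)
    fix l assume "l \<in> {..<n}"
    hence l: "l < n" by simp
    show "C $$ (k, l) * (Y *\<^sub>v z) $ l = 0"
    proof (cases "C $$ (k, l) = 0")
      case False
      hence "dk l = cnj (dk k)" using Cprop[OF l] by simp
      hence "Re (dk l) = Re (dk k)" by simp
      thus ?thesis using van[OF l] k by simp
    qed simp
  qed
  finally show ?thesis .
qed

lemma filter3:
  assumes "\<And>x. (A x \<and> \<not> B x \<and> \<not> C x) \<or> (\<not> A x \<and> B x \<and> \<not> C x) \<or> (\<not> A x \<and> \<not> B x \<and> C x)"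
  shows "length (filter A xs) + length (filter B xs) + length (filter C xs) = length xs"
proof (induction xs)
  case (Cons a xs)
  have "(A a \<and> \<not> B a \<and> \<not> C a) \<or> (\<not> A a \<and> B a \<and> \<not> C a) \<or> (\<not> A a \<and> \<not> B a \<and> C a)" by (rule assms)
  thus ?case using Cons by auto
qed simp

lemma hermitian_forms:
  fixes K :: "real mat" and S Y :: "complex mat" and dk :: "nat \<Rightarrow> complex" and g :: "nat \<Rightarrow> real"
    and Q L :: "real mat" and z :: "complex vec"
  assumes Y: "Y \<in> carrier_mat n n" and Q: "Q \<in> carrier_mat n n" and L: "L \<in> carrier_mat n n"
    and dL: "diagonal_mat L"
    and P: "P = mat n n (\<lambda>(i,j). Re (\<Sum>k<n. cnj (Y $$ (k,i)) * of_real (g k) * Y $$ (k,j)))"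
    and PQ: "P = Q * L * transpose_mat Q"
    and z: "z \<in> carrier_vec n"
  shows "(\<Sum>k<n. g k * (cmod ((Y *\<^sub>v z) $ k))^2) + (\<Sum>k<n. g k * (cmod ((map_mat cnj Y *\<^sub>v z) $ k))^2)
       = 2 * (\<Sum>l<n. L $$ (l,l) * (cmod (\<Sum>j<n. of_real (Q $$ (j,l)) * z $ j))^2)"
proof -
  define Hf where "Hf = (\<Sum>i<n. \<Sum>j<n. cnj (z $ i) * of_real (P $$ (i,j)) * z $ j)"
  define h where "h = (\<lambda>i j. \<Sum>k<n. cnj (Y $$ (k,i)) * of_real (g k) * Y $$ (k,j))"
  have Yc: "map_mat cnj Y \<in> carrier_mat n n" using Y by simp
  have Pij1: "of_real (P $$ (i,j)) = (h i j + cnj (h i j)) / 2" if "i < n" "j < n" for i j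
  proof -
    have "P $$ (i,j) = Re (h i j)" using that unfolding P h_def by simp
    thus ?thesis by (simp add: complex_add_cnj)
  qed
  have cnjh: "cnj (h i j) = (\<Sum>k<n. cnj (cnj (Y $$ (k,i))) * of_real (g k) * cnj (Y $$ (k,j)))" for i j
    unfolding h_def by simp
  have "2 * Hf = (\<Sum>i<n. \<Sum>j<n. cnj (z $ i) * h i j * z $ j + cnj (z $ i) * cnj (h i j) * z $ j)"
    unfolding Hf_def sum_distrib_left
  proof (intro sum.cong refl)
    fix i j assume "i \<in> {..<n}" "j \<in> {..<n}"
    hence "i < n" "j < n" by auto
    thus "2 * (cnj (z $ i) * of_real (P $$ (i, j)) * z $ j)
      = cnj (z $ i) * h i j * z $ j + cnj (z $ i) * cnj (h i j) * z $ j"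
      unfolding Pij1[OF \<open>i < n\<close> \<open>j < n\<close>] by (simp add: field_simps)
  qed
  also have "\<dots> = (\<Sum>i<n. \<Sum>j<n. cnj (z $ i) * h i j * z $ j) + (\<Sum>i<n. \<Sum>j<n. cnj (z $ i) * cnj (h i j) * z $ j)"
    by (simp only: sum.distrib)
  also have "(\<Sum>i<n. \<Sum>j<n. cnj (z $ i) * h i j * z $ j)
      = (\<Sum>k<n. of_real (g k) * cnj (\<Sum>i<n. Y $$ (k,i) * z $ i) * (\<Sum>j<n. Y $$ (k,j) * z $ j))"
    unfolding h_def by (rule GB)
  also have "(\<Sum>i<n. \<Sum>j<n. cnj (z $ i) * cnj (h i j) * z $ j)
      = (\<Sum>k<n. of_real (g k) * cnj (\<Sum>i<n. cnj (Y $$ (k,i)) * z $ i) * (\<Sum>j<n. cnj (Y $$ (k,j)) * z $ j))"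
    unfolding cnjh by (rule GB)
  finally have H1':"2 * Hf = (\<Sum>k<n. of_real (g k) * cnj (\<Sum>i<n. Y $$ (k,i) * z $ i) * (\<Sum>j<n. Y $$ (k,j) * z $ j))
     + (\<Sum>k<n. of_real (g k) * cnj (\<Sum>i<n. cnj (Y $$ (k,i)) * z $ i) * (\<Sum>j<n. cnj (Y $$ (k,j)) * z $ j))" .
  have H1: "2 * Hf = (\<Sum>k<n. of_real (g k) * cnj ((Y *\<^sub>v z) $ k) * (Y *\<^sub>v z) $ k)
     + (\<Sum>k<n. of_real (g k) * cnj ((map_mat cnj Y *\<^sub>v z) $ k) * (map_mat cnj Y *\<^sub>v z) $ k)"
    unfolding H1' using entry_mult_vec[OF Y z] entry_mult_vec[OF Yc z] Y by simp
  have H1r: "2 * Hf = of_real ((\<Sum>k<n. g k * (cmod ((Y *\<^sub>v z) $ k))^2) + (\<Sum>k<n. g k * (cmod ((map_mat cnj Y *\<^sub>v z) $ k))^2))"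
    unfolding H1 by (simp add: mult.assoc cmod_sq)
  have Ld: "L = mat_diag n (\<lambda>l. L $$ (l,l))"
    by (rule eq_matI) (use L dL in \<open>auto simp: mat_diag_def diagonal_mat_def\<close>)
  have QL: "Q * L = mat n n (\<lambda>(i,l). Q $$ (i,l) * L $$ (l,l))"
    by (subst Ld, subst mat_diag_mult_right[OF Q]) simp
  have Pij2: "of_real (P $$ (i,j)) = (\<Sum>l<n. cnj (of_real (Q $$ (i,l))) * of_real (L $$ (l,l)) * of_real (Q $$ (j,l)))"
    if ij: "i < n" "j < n" for i j
  proof -
    have QLc: "Q * L \<in> carrier_mat n n" using Q L by simp
    have "P $$ (i,j) = (\<Sum>l<n. (Q * L) $$ (i,l) * transpose_mat Q $$ (l,j))"
      unfolding PQ by (rule entry_mult[OF QLc _ ij]) (use Q in simp)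
    also have "\<dots> = (\<Sum>l<n. Q $$ (i,l) * L $$ (l,l) * Q $$ (j,l))"
      by (intro sum.cong refl) (use ij Q in \<open>simp add: QL\<close>)
    finally show ?thesis by simp
  qed
  have "Hf = (\<Sum>i<n. \<Sum>j<n. cnj (z $ i) * (\<Sum>l<n. cnj (of_real (Q $$ (i,l))) * of_real (L $$ (l,l)) * of_real (Q $$ (j,l))) * z $ j)"
    unfolding Hf_def by (intro sum.cong refl) (simp add: Pij2)
  also have "\<dots> = (\<Sum>l<n. of_real (L $$ (l,l)) * cnj (\<Sum>i<n. of_real (Q $$ (i,l)) * z $ i) * (\<Sum>j<n. of_real (Q $$ (j,l)) * z $ j))"
    by (rule GB)
  also have "\<dots> = of_real (\<Sum>l<n. L $$ (l,l) * (cmod (\<Sum>j<n. of_real (Q $$ (j,l)) * z $ j))^2)"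
    by (simp only: of_real_sum of_real_mult mult.assoc cmod_sq)
  finally have H2: "Hf = of_real (\<Sum>l<n. L $$ (l,l) * (cmod (\<Sum>j<n. of_real (Q $$ (j,l)) * z $ j))^2)" .
  have "of_real (2 * (\<Sum>l<n. L $$ (l,l) * (cmod (\<Sum>j<n. of_real (Q $$ (j,l)) * z $ j))^2)) =
     (of_real ((\<Sum>k<n. g k * (cmod ((Y *\<^sub>v z) $ k))^2) + (\<Sum>k<n. g k * (cmod ((map_mat cnj Y *\<^sub>v z) $ k))^2)) :: complex)"
    unfolding H1r[symmetric] H2 by (simp only: of_real_mult of_real_numeral)
  thus ?thesis by (simp only: of_real_eq_iff)
qed

lemma main_part2:
  fixes K :: "real mat" and S Y :: "complex mat" and dk :: "nat \<Rightarrow> complex" and \<epsilon> :: real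
  assumes K: "K \<in> carrier_mat n n" and S: "S \<in> carrier_mat n n" and Y: "Y \<in> carrier_mat n n"
    and SY: "S * Y = 1\<^sub>m n" and YS: "Y * S = 1\<^sub>m n"
    and KSY: "map_mat complex_of_real K = S * mat_diag n dk * Y"
    and eps0: "0 \<le> \<epsilon>" and epos: "\<And>k. k < n \<Longrightarrow> Re (dk k) > 0 \<Longrightarrow> Re (dk k) > \<epsilon>"
  defines "g \<equiv> \<lambda>k. if Re (dk k) > 0 then -1 else (1::real)"
  defines "P \<equiv> mat n n (\<lambda>(i,j). Re (\<Sum>k<n. cnj (Y $$ (k,i)) * of_real (g k) * Y $$ (k,j)))"
  defines "p \<equiv> length (filter (\<lambda>k. Re (dk k) > 0) [0..<n])"
  shows "inertia P = (p, 0, n - p)"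
proof -
  have P: "P \<in> carrier_mat n n" "transpose_mat P = P"
    using main_part1[OF K S Y SY YS KSY eps0 epos] unfolding P_def g_def by auto
  obtain Q L where Q: "Q \<in> carrier_mat n n" and L: "L \<in> carrier_mat n n" and dL: "diagonal_mat L"
    and QTQ: "transpose_mat Q * Q = 1\<^sub>m n" and QQT: "Q * transpose_mat Q = 1\<^sub>m n"
    and PQ: "P = Q * L * transpose_mat Q"
    using spectral_sym[OF P] by blast
  define lam where "lam = (\<lambda>i. L $$ (i,i))"
  define ls where "ls = map lam [0..<n]"
  have sim: "similar_mat P L" unfolding similar_mat_def similar_mat_wit_def
    by (rule exI[of _ Q], rule exI[of _ "transpose_mat Q"]) (use P Q L QTQ QQT PQ in auto)
  have ut: "upper_triangular L" using dL L unfolding diagonal_mat_def upper_triangular_def by auto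
  have cpP: "char_poly P = (\<Prod>a\<leftarrow>ls. [:- a, 1:])"
    unfolding char_poly_similar[OF sim] char_poly_upper_triangular[OF L ut]
    using L by (simp add: diag_mat_def ls_def lam_def)
  have eig: "eigenvalue P x \<longleftrightarrow> x \<in> set ls" for x
    unfolding eigenvalue_root_char_poly[OF P(1)] cpP by (auto simp: poly_prod_list_zero_iff)
  have inP: "inertia P = (length (filter (\<lambda>x. x < 0) ls), length (filter (\<lambda>x. x = 0) ls), length (filter (\<lambda>x. 0 < x) ls))"
    unfolding inertia_def eig cpP by (simp only: sum_order_linear_factors)
  define Nn where "Nn = length (filter (\<lambda>i. lam i < 0) [0..<n])"
  define Nz where "Nz = length (filter (\<lambda>i. lam i = 0) [0..<n])"
  define Np where "Np = length (filter (\<lambda>i. lam i > 0) [0..<n])"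
  have inP2: "inertia P = (Nn, Nz, Np)" unfolding inP Nn_def Nz_def Np_def ls_def by (simp add: filter_map o_def)
  have tot: "Nn + Nz + Np = n" unfolding Nn_def Nz_def Np_def
    by (subst filter3[where xs="[0..<n]"]) auto
  have pc: "p + length (filter (\<lambda>k. \<not> Re (dk k) > 0) [0..<n]) = n"
    unfolding p_def using sum_length_filter_compl[of _ "[0..<n]"] by simp
  have HF: "(\<Sum>k<n. g k * (cmod ((Y *\<^sub>v z) $ k))^2) + (\<Sum>k<n. g k * (cmod ((map_mat cnj Y *\<^sub>v z) $ k))^2)
       = 2 * (\<Sum>l<n. lam l * (cmod (\<Sum>j<n. of_real (Q $$ (j,l)) * z $ j))^2)" if z: "z \<in> carrier_vec n" for z
    using hermitian_forms[OF Y Q L dL P_def[THEN meta_eq_to_obj_eq] PQ z] unfolding lam_def .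
  define qv where "qv = (\<lambda>l. vec n (\<lambda>j. complex_of_real (Q $$ (j,l))))"
  have qvz: "qv l \<bullet> z = (\<Sum>j<n. of_real (Q $$ (j,l)) * z $ j)" if "z \<in> carrier_vec n" for l z
    unfolding qv_def using scalar_prod_sum[of "vec n (\<lambda>j. complex_of_real (Q $$ (j,l)))" n z] that by simp
  have rowYz: "row Y k \<bullet> z = (Y *\<^sub>v z) $ k" if "k < n" for k z using that Y by simp
  have nzY: "\<exists>k<n. (Y *\<^sub>v z) $ k \<noteq> 0" if z: "z \<in> carrier_vec n" "z \<noteq> 0\<^sub>v n" for z
  proof (rule ccontr)
    assume "\<not> ?thesis"
    hence "Y *\<^sub>v z = 0\<^sub>v n" using Y by (intro eq_vecI) auto
    moreover have "z = S *\<^sub>v (Y *\<^sub>v z)" using S Y z SY by (simp add: assoc_mult_mat_vec[symmetric, of _ n n _ n])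
    moreover have "S *\<^sub>v 0\<^sub>v n = 0\<^sub>v n" using S by (intro eq_vecI) auto
    ultimately have "z = 0\<^sub>v n" by simp
    thus False using z by simp
  qed
  have fsc: "set (map qv xs @ map (row Y) ys) \<subseteq> carrier_vec n" if "set ys \<subseteq> {..<n}" for xs ys
    using that Y unfolding qv_def by auto
  have pn: "p \<le> n" using pc by simp
  have A: "p \<le> Nn"
  proof (rule ccontr)
    assume "\<not> p \<le> Nn"
    define fs where "fs = map qv (filter (\<lambda>l. lam l < 0) [0..<n]) @ map (row Y) (filter (\<lambda>k. \<not> Re (dk k) > 0) [0..<n])"
    have "length fs < n" using pc \<open>\<not> p \<le> Nn\<close> unfolding fs_def Nn_def by simp
    moreover have "set fs \<subseteq> carrier_vec n" unfolding fs_def by (rule fsc) auto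
    ultimately obtain z where z: "z \<in> carrier_vec n" "z \<noteq> 0\<^sub>v n" and orth: "\<forall>f\<in>set fs. f \<bullet> z = 0"
      using nonzero_orth by blast
    have zq: "(\<Sum>j<n. of_real (Q $$ (j,l)) * z $ j) = 0" if "l < n" "lam l < 0" for l
      using orth that unfolding fs_def qvz[OF z(1), symmetric] by auto
    have zy: "(Y *\<^sub>v z) $ k = 0" if "k < n" "\<not> Re (dk k) > 0" for k
      using orth that unfolding fs_def rowYz[OF that(1), symmetric] by auto
    have zyc: "(map_mat cnj Y *\<^sub>v z) $ k = 0" if "k < n" "\<not> Re (dk k) > 0" for k
      by (rule conj_argument[OF K S Y SY YS KSY z(1), where \<Phi>="\<lambda>r. \<not> r > 0"]) (use zy that in auto)
    obtain k0 where k0: "k0 < n" "(Y *\<^sub>v z) $ k0 \<noteq> 0" using nzY[OF z] by blast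
    have pk0: "Re (dk k0) > 0" using zy k0 by auto
    have R3: "0 \<le> (\<Sum>l<n. lam l * (cmod (\<Sum>j<n. of_real (Q $$ (j,l)) * z $ j))^2)"
    proof (rule sum_nonneg)
      fix l assume "l \<in> {..<n}"
      thus "0 \<le> lam l * (cmod (\<Sum>j<n. of_real (Q $$ (j,l)) * z $ j))^2"
        using zq[of l] by (cases "lam l < 0") auto
    qed
    have "0 < (\<Sum>k<n. - (g k * (cmod ((Y *\<^sub>v z) $ k))^2))"
    proof (rule sum_pos2[of _ k0])
      show "0 < - (g k0 * (cmod ((Y *\<^sub>v z) $ k0))^2)" using pk0 k0 unfolding g_def by simp
      fix k assume "k \<in> {..<n}"
      thus "0 \<le> - (g k * (cmod ((Y *\<^sub>v z) $ k))^2)" using zy[of k] unfolding g_def by auto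
    qed (use k0 in auto)
    hence R1: "(\<Sum>k<n. g k * (cmod ((Y *\<^sub>v z) $ k))^2) < 0" by (simp add: sum_negf)
    have R2: "(\<Sum>k<n. g k * (cmod ((map_mat cnj Y *\<^sub>v z) $ k))^2) \<le> 0"
    proof (rule sum_nonpos)
      fix k assume "k \<in> {..<n}"
      thus "g k * (cmod ((map_mat cnj Y *\<^sub>v z) $ k))^2 \<le> 0" using zyc[of k] unfolding g_def by auto
    qed
    show False using HF[OF z(1)] R1 R2 R3 by linarith
  qed
  have B: "n - p \<le> Np"
  proof (rule ccontr)
    assume "\<not> n - p \<le> Np"
    define fs where "fs = map qv (filter (\<lambda>l. lam l > 0) [0..<n]) @ map (row Y) (filter (\<lambda>k. Re (dk k) > 0) [0..<n])"
    have "length fs < n" using pc \<open>\<not> n - p \<le> Np\<close> unfolding fs_def Np_def p_def by simp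
    moreover have "set fs \<subseteq> carrier_vec n" unfolding fs_def by (rule fsc) auto
    ultimately obtain z where z: "z \<in> carrier_vec n" "z \<noteq> 0\<^sub>v n" and orth: "\<forall>f\<in>set fs. f \<bullet> z = 0"
      using nonzero_orth by blast
    have zq: "(\<Sum>j<n. of_real (Q $$ (j,l)) * z $ j) = 0" if "l < n" "lam l > 0" for l
      using orth that unfolding fs_def qvz[OF z(1), symmetric] by auto
    have zy: "(Y *\<^sub>v z) $ k = 0" if "k < n" "Re (dk k) > 0" for k
      using orth that unfolding fs_def rowYz[OF that(1), symmetric] by auto
    have zyc: "(map_mat cnj Y *\<^sub>v z) $ k = 0" if "k < n" "Re (dk k) > 0" for k
      by (rule conj_argument[OF K S Y SY YS KSY z(1), where \<Phi>="\<lambda>r. r > 0"]) (use zy that in auto)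
    obtain k0 where k0: "k0 < n" "(Y *\<^sub>v z) $ k0 \<noteq> 0" using nzY[OF z] by blast
    have pk0: "\<not> Re (dk k0) > 0" using zy k0 by auto
    have R3: "(\<Sum>l<n. lam l * (cmod (\<Sum>j<n. of_real (Q $$ (j,l)) * z $ j))^2) \<le> 0"
    proof (rule sum_nonpos)
      fix l assume "l \<in> {..<n}"
      thus "lam l * (cmod (\<Sum>j<n. of_real (Q $$ (j,l)) * z $ j))^2 \<le> 0"
        using zq[of l] by (cases "lam l > 0") (auto simp: mult_nonpos_nonneg)
    qed
    have R1: "0 < (\<Sum>k<n. g k * (cmod ((Y *\<^sub>v z) $ k))^2)"
    proof (rule sum_pos2[of _ k0])
      show "0 < g k0 * (cmod ((Y *\<^sub>v z) $ k0))^2" using pk0 k0 unfolding g_def by simp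
      fix k assume "k \<in> {..<n}"
      thus "0 \<le> g k * (cmod ((Y *\<^sub>v z) $ k))^2" using zy[of k] unfolding g_def by auto
    qed (use k0 in auto)
    have R2: "0 \<le> (\<Sum>k<n. g k * (cmod ((map_mat cnj Y *\<^sub>v z) $ k))^2)"
    proof (rule sum_nonneg)
      fix k assume "k \<in> {..<n}"
      thus "0 \<le> g k * (cmod ((map_mat cnj Y *\<^sub>v z) $ k))^2" using zyc[of k] unfolding g_def by auto
    qed
    show False using HF[OF z(1)] R1 R2 R3 by linarith
  qed
  have "Nn = p" "Np = n - p" "Nz = 0" using A B tot pn by linarith+
  thus ?thesis unfolding inP2 by simp
qed

theorem corollary1:
  fixes n d m :: nat and \<omega> \<sigma>\<^sub>b t\<^sub>0 h \<epsilon> :: real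
    and W\<^sub>i\<^sub>n U R W\<^sub>o\<^sub>u\<^sub>t J\<^sub>T :: "real mat"
    and u r :: "real \<Rightarrow> real vec"
  assumes dn: "d < n"
    and Win: "W\<^sub>i\<^sub>n \<in> carrier_mat n d"
    and Win_rank: "vec_space.rank n W\<^sub>i\<^sub>n = d"
    and ones: "vec n (\<lambda>_. 1) \<notin> {W\<^sub>i\<^sub>n *\<^sub>v x | x. x \<in> carrier_vec d}"
    and om: "\<omega> < 1"
    and u_dim: "\<forall>t\<ge>0. u t \<in> carrier_vec d"
    and r_dim: "\<forall>t\<ge>0. r t \<in> carrier_vec n"
    and r0: "r 0 = 0\<^sub>v n"
    and ode: "\<forall>t\<ge>0. \<forall>i<n. ((\<lambda>s. r s $ i) has_real_derivative
                 ((-1 + \<omega>) * r t $ i + (W\<^sub>i\<^sub>n *\<^sub>v u t) $ i + \<sigma>\<^sub>b)) (at t within {0..})"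
    and t0: "0 \<le> t\<^sub>0" and h: "0 < h"
    and U_def: "U = mat d m (\<lambda>(i, k). u (t\<^sub>0 + real k * h) $ i)"
    and R_def: "R = mat n m (\<lambda>(i, k). r (t\<^sub>0 + real k * h) $ i)"
    and U_rank: "vec_space.rank d U = d"
    and R_rank: "vec_space.rank n R = n"
    and Wout: "W\<^sub>o\<^sub>u\<^sub>t = U * pinv R"
    and JT: "J\<^sub>T = (-1 + \<omega>) \<cdot>\<^sub>m 1\<^sub>m n + W\<^sub>i\<^sub>n * W\<^sub>o\<^sub>u\<^sub>t"
    and diag: "diagonalizable J\<^sub>T"
    and inv: "invertible_mat J\<^sub>T"
    and nonempty: "Lambda_D \<omega> (W\<^sub>o\<^sub>u\<^sub>t * W\<^sub>i\<^sub>n) \<noteq> {#}"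
    and eps: "0 \<le> \<epsilon>" "\<epsilon> < Min (Re ` pos_eigs (W\<^sub>o\<^sub>u\<^sub>t * W\<^sub>i\<^sub>n))"
  shows "p_dominant n J\<^sub>T (1 - \<omega> - \<epsilon>) (size (Lambda_D \<omega> (W\<^sub>o\<^sub>u\<^sub>t * W\<^sub>i\<^sub>n)))
         \<and> size (Lambda_D \<omega> (W\<^sub>o\<^sub>u\<^sub>t * W\<^sub>i\<^sub>n)) \<le> d"
proof -
  define a where "a = -1 + \<omega>"
  define K where "K = W\<^sub>i\<^sub>n * W\<^sub>o\<^sub>u\<^sub>t"
  define M where "M = W\<^sub>o\<^sub>u\<^sub>t * W\<^sub>i\<^sub>n"
  have JTK: "J\<^sub>T = a \<cdot>\<^sub>m 1\<^sub>m n + K" unfolding JT a_def K_def ..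
  have rowJ: "dim_row J\<^sub>T = n" unfolding JT using Win by simp
  have colJ: "dim_col J\<^sub>T = dim_col W\<^sub>o\<^sub>u\<^sub>t" unfolding JT by simp
  have sqJ: "dim_col J\<^sub>T = dim_row J\<^sub>T" using inv unfolding invertible_mat_def by simp
  have Wout: "W\<^sub>o\<^sub>u\<^sub>t \<in> carrier_mat d n"
    unfolding carrier_mat_def using rowJ colJ sqJ by (simp add: Wout U_def)
  have J: "J\<^sub>T \<in> carrier_mat n n" unfolding carrier_mat_def using rowJ sqJ by simp
  have K: "K \<in> carrier_mat n n" unfolding K_def using Win Wout by simp
  have M: "M \<in> carrier_mat d d" unfolding M_def using Win Wout by simp
  obtain D where dD: "diagonal_mat D" and simD: "similar_mat (cmat J\<^sub>T) D"
    using diag unfolding diagonalizable_def by blast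
  obtain S Y where wit: "similar_mat_wit (cmat J\<^sub>T) D S Y" using simD unfolding similar_mat_def by blast
  have cJ: "cmat J\<^sub>T \<in> carrier_mat n n" unfolding cmat_def using J by simp
  have S: "S \<in> carrier_mat n n" and Y: "Y \<in> carrier_mat n n" and D: "D \<in> carrier_mat n n"
    and SY: "S * Y = 1\<^sub>m n" and YS: "Y * S = 1\<^sub>m n" and cJeq: "cmat J\<^sub>T = S * D * Y"
    using wit unfolding similar_mat_wit_def Let_def carrier_matD(1)[OF cJ] by simp_all
  define dk where "dk = (\<lambda>i. D $$ (i,i) - complex_of_real a)"
  have Ddk: "mat_diag n dk = D + (- complex_of_real a) \<cdot>\<^sub>m 1\<^sub>m n"
    by (rule eq_matI) (use D dD in \<open>auto simp: mat_diag_def diagonal_mat_def dk_def\<close>)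
  have cJK: "cmat J\<^sub>T = complex_of_real a \<cdot>\<^sub>m 1\<^sub>m n + map_mat complex_of_real K"
    unfolding JTK cmat_def by (rule eq_matI) (use K in auto)
  have KSY: "map_mat complex_of_real K = S * mat_diag n dk * Y"
  proof -
    have "S * mat_diag n dk * Y = S * D * Y + S * ((- complex_of_real a) \<cdot>\<^sub>m 1\<^sub>m n) * Y"
      unfolding Ddk using S D Y by (simp add: mult_add_distrib_mat[of _ n n] add_mult_distrib_mat[of _ n n])
    also have "S * ((- complex_of_real a) \<cdot>\<^sub>m 1\<^sub>m n) * Y = (- complex_of_real a) \<cdot>\<^sub>m 1\<^sub>m n"
    proof -
      have "S * ((- complex_of_real a) \<cdot>\<^sub>m 1\<^sub>m n) = (- complex_of_real a) \<cdot>\<^sub>m S"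
        using mult_smult_distrib[OF S one_carrier_mat] S by simp
      thus ?thesis using mult_smult_assoc_mat[OF S Y] SY by simp
    qed
    finally show ?thesis unfolding cJeq[symmetric] cJK using K by (intro eq_matI) auto
  qed
  have cWin: "cmat W\<^sub>i\<^sub>n \<in> carrier_mat n d" unfolding cmat_def using Win by simp
  have cWout: "cmat W\<^sub>o\<^sub>u\<^sub>t \<in> carrier_mat d n" unfolding cmat_def using Wout by simp
  have cK: "map_mat complex_of_real K = cmat W\<^sub>i\<^sub>n * cmat W\<^sub>o\<^sub>u\<^sub>t"
    unfolding K_def cmat_def by (rule of_real_hom.mat_hom_mult[OF Win Wout])
  have cM: "cmat M = cmat W\<^sub>o\<^sub>u\<^sub>t * cmat W\<^sub>i\<^sub>n"
    unfolding M_def cmat_def by (rule of_real_hom.mat_hom_mult[OF Wout Win])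
  have cMc: "cmat M \<in> carrier_mat d d" unfolding cmat_def using M by simp
  have cKc: "map_mat complex_of_real K \<in> carrier_mat n n" using K by simp
  have syl: "[:0,1:]^d * char_poly (map_mat complex_of_real K) = [:0,1:]^n * char_poly (cmat M)"
    unfolding cK cM by (rule sylvester_char_poly[OF cWin cWout])
  define dks where "dks = map dk [0..<n]"
  have simK: "similar_mat (map_mat complex_of_real K) (mat_diag n dk)"
    unfolding similar_mat_def similar_mat_wit_def Let_def
    by (rule exI[of _ S], rule exI[of _ Y]) (use cKc S Y SY YS KSY in simp)
  have utD: "upper_triangular (mat_diag n dk)" unfolding upper_triangular_def mat_diag_def by simp
  have cpK: "char_poly (map_mat complex_of_real K) = (\<Prod>a\<leftarrow>dks. [:- a, 1:])"
  proof -
    have "diag_mat (mat_diag n dk) = dks"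
      by (rule nth_equalityI) (auto simp: diag_mat_def mat_diag_def dks_def)
    thus ?thesis unfolding char_poly_similar[OF simK] char_poly_upper_triangular[OF mat_diag_dim utD] by simp
  qed
  obtain ms where cpM: "char_poly (cmat M) = (\<Prod>a\<leftarrow>ms. [:- a, 1:])" and lms: "length ms = d"
    using char_poly_factorized[OF cMc] by blast
  have nz1: "(\<Prod>a\<leftarrow>as. [:- a, 1:]) \<noteq> (0 :: complex poly)" for as
    unfolding prod_list_zero_iff by auto
  have sylP: "[:0,1:]^d * (\<Prod>a\<leftarrow>dks. [:- a, 1:]) = [:0,1:]^n * (\<Prod>a\<leftarrow>ms. [:- a, 1:])"
    using syl unfolding cpK cpM .
  have pz: "poly (\<Prod>a\<leftarrow>xs. [:- a, 1:]) x = 0 \<longleftrightarrow> x \<in> set xs" for xs and x :: complex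
    by (induct xs) auto
  have rootKM: "\<mu> \<in> set ms \<longleftrightarrow> \<mu> \<in> set dks" if mu: "\<mu> \<noteq> 0" for \<mu>
  proof -
    have "\<mu>^d * poly (\<Prod>a\<leftarrow>dks. [:- a, 1:]) \<mu> = \<mu>^n * poly (\<Prod>a\<leftarrow>ms. [:- a, 1:]) \<mu>"
      using arg_cong[OF sylP, of "\<lambda>p. poly p \<mu>"] by (simp add: poly_monom)
    hence "(poly (\<Prod>a\<leftarrow>dks. [:- a, 1:]) \<mu> = 0) = (poly (\<Prod>a\<leftarrow>ms. [:- a, 1:]) \<mu> = 0)"
      using mu by (metis mult_eq_0_iff power_not_zero)
    thus ?thesis using pz by blast
  qed
  have ordKM: "Polynomial.order \<mu> (\<Prod>a\<leftarrow>ms. [:- a, 1:]) = Polynomial.order \<mu> (\<Prod>a\<leftarrow>dks. [:- a, 1:])"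
    if mu: "\<mu> \<noteq> 0" for \<mu>
  proof -
    have o0: "Polynomial.order \<mu> ([:0,1:]^k) = 0" for k :: nat
      by (rule order_0I) (use mu in simp)
    have "Polynomial.order \<mu> ([:0,1:]^d * (\<Prod>a\<leftarrow>dks. [:- a, 1:])) = Polynomial.order \<mu> ([:0,1:]^n * (\<Prod>a\<leftarrow>ms. [:- a, 1:]))"
      unfolding sylP ..
    moreover have "Polynomial.order \<mu> ([:0,1:]^k * (\<Prod>a\<leftarrow>xs. [:- a, 1:])) = Polynomial.order \<mu> (\<Prod>a\<leftarrow>xs. [:- a, 1:])" for k xs
    proof -
      have "[:0,1:]^k * (\<Prod>a\<leftarrow>xs. [:- a, 1:]) \<noteq> (0 :: complex poly)" using nz1[of xs] by simp
      hence "Polynomial.order \<mu> ([:0,1:]^k * (\<Prod>a\<leftarrow>xs. [:- a, 1:])) = Polynomial.order \<mu> ([:0,1:]^k) + Polynomial.order \<mu> (\<Prod>a\<leftarrow>xs. [:- a, 1:])"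
        by (rule order_mult)
      thus ?thesis using o0[of k] by simp
    qed
    ultimately show ?thesis by simp
  qed
  have posM: "pos_eigs M = {\<mu>. \<mu> \<in> set ms \<and> 0 < Re \<mu>}"
    unfolding pos_eigs_def eigenvalue_root_char_poly[OF cMc] cpM by (auto simp: poly_prod_list_zero_iff)
  have posM2: "pos_eigs M = {\<mu>. \<mu> \<in> set dks \<and> 0 < Re \<mu>}"
    unfolding posM
  proof (rule Collect_cong)
    fix \<mu> :: complex
    show "(\<mu> \<in> set ms \<and> 0 < Re \<mu>) = (\<mu> \<in> set dks \<and> 0 < Re \<mu>)"
    proof (cases "\<mu> = 0")
      case False thus ?thesis using rootKM[OF False] by simp
    qed simp
  qed
  have sizeL: "size (Lambda_D \<omega> M) = (\<Sum>\<mu>\<in>pos_eigs M. alg_mult M \<mu>)" unfolding Lambda_D_def by simp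
  have s1: "(\<Sum>\<mu>\<in>pos_eigs M. alg_mult M \<mu>) = length (filter (\<lambda>\<mu>. 0 < Re \<mu>) ms)"
    unfolding alg_mult_def posM cpM by (rule sum_order_linear_factors)
  have s2: "(\<Sum>\<mu>\<in>pos_eigs M. alg_mult M \<mu>) = length (filter (\<lambda>\<mu>. 0 < Re \<mu>) dks)"
  proof -
    have "(\<Sum>\<mu>\<in>pos_eigs M. alg_mult M \<mu>) = (\<Sum>\<mu>\<in>{\<mu>. \<mu> \<in> set dks \<and> 0 < Re \<mu>}. Polynomial.order \<mu> (\<Prod>a\<leftarrow>dks. [:- a, 1:]))"
      unfolding alg_mult_def cpM posM2
    proof (intro sum.cong refl)
      fix \<mu> assume "\<mu> \<in> {\<mu>. \<mu> \<in> set dks \<and> 0 < Re \<mu>}"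
      hence "\<mu> \<noteq> 0" by auto
      thus "Polynomial.order \<mu> (\<Prod>a\<leftarrow>ms. [:- a, 1:]) = Polynomial.order \<mu> (\<Prod>a\<leftarrow>dks. [:- a, 1:])" by (rule ordKM)
    qed
    thus ?thesis by (simp only: sum_order_linear_factors)
  qed
  define p where "p = length (filter (\<lambda>k. Re (dk k) > 0) [0..<n])"
  have sizep: "size (Lambda_D \<omega> M) = p" unfolding sizeL s2 p_def dks_def by (simp add: filter_map o_def)
  have sized: "size (Lambda_D \<omega> M) \<le> d" unfolding sizeL s1 using lms by (metis length_filter_le)
  have finM: "finite (pos_eigs M)" unfolding posM by simp
  have epos: "Re (dk k) > \<epsilon>" if "k < n" "Re (dk k) > 0" for k
  proof -
    have "dk k \<in> pos_eigs M" unfolding posM2 dks_def using that by simp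
    hence "Min (Re ` pos_eigs M) \<le> Re (dk k)" using finM by (intro Min_le) auto
    thus ?thesis using eps(2) unfolding M_def by simp
  qed
  define g where "g = (\<lambda>k. if Re (dk k) > 0 then -1 else (1::real))"
  define P where "P = mat n n (\<lambda>(i,j). Re (\<Sum>k<n. cnj (Y $$ (k,i)) * of_real (g k) * Y $$ (k,j)))"
  have Pc: "P \<in> carrier_mat n n" unfolding P_def by simp
  have Psym: "transpose_mat P = P" unfolding P_def g_def
    by (rule main_part1(2)[OF K S Y SY YS KSY eps(1) epos])
  have Plyap: "x \<bullet> (P *\<^sub>v (K *\<^sub>v x - \<epsilon> \<cdot>\<^sub>v x)) \<le> 0" if "x \<in> carrier_vec n" for x
    unfolding P_def g_def by (rule main_part1(3)[OF K S Y SY YS KSY eps(1) epos that])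
  have Pin: "inertia P = (p, 0, n - p)" unfolding P_def g_def p_def
    by (rule main_part2[OF K S Y SY YS KSY eps(1) epos])
  define r where "r = 1 - \<omega> - \<epsilon>"
  have JT_c: "transpose_mat J\<^sub>T \<in> carrier_mat n n" using J by simp
  have L1c: "transpose_mat J\<^sub>T * P + P * J\<^sub>T \<in> carrier_mat n n" using J Pc by simp
  have R1c: "(- 2 * r) \<cdot>\<^sub>m P - 0 \<cdot>\<^sub>m 1\<^sub>m n \<in> carrier_mat n n" unfolding minus_mat_def carrier_mat_def by simp
  have loew: "loewner_le n (transpose_mat J\<^sub>T * P + P * J\<^sub>T) ((- 2 * r) \<cdot>\<^sub>m P - 0 \<cdot>\<^sub>m 1\<^sub>m n)"
    unfolding loewner_le_def
  proof (intro conjI ballI L1c R1c)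
    fix x :: "real vec" assume x: "x \<in> carrier_vec n"
    have Px: "P *\<^sub>v x \<in> carrier_vec n" using Pc x by simp
    have Jx: "J\<^sub>T *\<^sub>v x \<in> carrier_vec n" using J x by simp
    have PJx: "P *\<^sub>v (J\<^sub>T *\<^sub>v x) \<in> carrier_vec n" using Pc Jx by simp
    have TPx: "transpose_mat J\<^sub>T *\<^sub>v (P *\<^sub>v x) \<in> carrier_vec n" using JT_c Px by simp
    have "(transpose_mat J\<^sub>T * P + P * J\<^sub>T) *\<^sub>v x = transpose_mat J\<^sub>T *\<^sub>v (P *\<^sub>v x) + P *\<^sub>v (J\<^sub>T *\<^sub>v x)"
      using J Pc x JT_c by (simp add: add_mult_distrib_mat_vec[of _ n n] assoc_mult_mat_vec[of _ n n _ n])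
    hence "x \<bullet> ((transpose_mat J\<^sub>T * P + P * J\<^sub>T) *\<^sub>v x) = x \<bullet> (transpose_mat J\<^sub>T *\<^sub>v (P *\<^sub>v x)) + x \<bullet> (P *\<^sub>v (J\<^sub>T *\<^sub>v x))"
      using scalar_prod_add_distrib[OF x TPx PJx] by simp
    also have "x \<bullet> (transpose_mat J\<^sub>T *\<^sub>v (P *\<^sub>v x)) = (J\<^sub>T *\<^sub>v x) \<bullet> (P *\<^sub>v x)"
      using transpose_vec_mult_scalar[OF JT_c Px x] by simp
    also have "(J\<^sub>T *\<^sub>v x) \<bullet> (P *\<^sub>v x) = x \<bullet> (P *\<^sub>v (J\<^sub>T *\<^sub>v x))"
    proof -
      have "(transpose_mat P *\<^sub>v (J\<^sub>T *\<^sub>v x)) \<bullet> x = (J\<^sub>T *\<^sub>v x) \<bullet> (P *\<^sub>v x)"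
        by (rule transpose_vec_mult_scalar[OF Pc x Jx])
      thus ?thesis unfolding Psym using comm_scalar_prod[OF PJx x] by simp
    qed
    finally have lhs: "x \<bullet> ((transpose_mat J\<^sub>T * P + P * J\<^sub>T) *\<^sub>v x) = 2 * (x \<bullet> (P *\<^sub>v (J\<^sub>T *\<^sub>v x)))" by simp
    have Meq: "(- 2 * r) \<cdot>\<^sub>m P - 0 \<cdot>\<^sub>m 1\<^sub>m n = (- 2 * r) \<cdot>\<^sub>m P"
      by (rule eq_matI) (use Pc in auto)
    have "((- 2 * r) \<cdot>\<^sub>m P) *\<^sub>v x = (- 2 * r) \<cdot>\<^sub>v (P *\<^sub>v x)"
      by (rule eq_vecI) (use Pc x in \<open>auto simp: scalar_prod_def sum_distrib_left mult_ac\<close>)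
    hence rhs: "x \<bullet> (((- 2 * r) \<cdot>\<^sub>m P - 0 \<cdot>\<^sub>m 1\<^sub>m n) *\<^sub>v x) = - 2 * r * (x \<bullet> (P *\<^sub>v x))"
      unfolding Meq using x Px by simp
    have KJ: "K *\<^sub>v x - \<epsilon> \<cdot>\<^sub>v x = J\<^sub>T *\<^sub>v x + r \<cdot>\<^sub>v x"
    proof (rule eq_vecI)
      fix i assume "i < dim_vec (J\<^sub>T *\<^sub>v x + r \<cdot>\<^sub>v x)"
      hence i: "i < n" using J x by simp
      have "(J\<^sub>T *\<^sub>v x) $ i = (\<Sum>l<n. J\<^sub>T $$ (i, l) * x $ l)" by (rule entry_mult_vec[OF J x i])
      also have "\<dots> = (\<Sum>l<n. (a * (if i = l then 1 else 0) + K $$ (i,l)) * x $ l)"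
        by (intro sum.cong refl) (use i K in \<open>simp add: JTK\<close>)
      also have "\<dots> = (\<Sum>l<n. a * ((if i = l then 1 else 0) * x $ l)) + (\<Sum>l<n. K $$ (i,l) * x $ l)"
        unfolding sum.distrib[symmetric] by (intro sum.cong refl) (simp add: algebra_simps)
      also have "(\<Sum>l<n. a * ((if i = l then 1 else 0) * x $ l)) = (\<Sum>l<n. if i = l then a * x $ i else 0)"
        by (intro sum.cong refl) auto
      also have "\<dots> = a * x $ i" using i by simp
      finally have "(J\<^sub>T *\<^sub>v x) $ i = a * x $ i + (K *\<^sub>v x) $ i" using entry_mult_vec[OF K x i] by simp
      thus "(K *\<^sub>v x - \<epsilon> \<cdot>\<^sub>v x) $ i = (J\<^sub>T *\<^sub>v x + r \<cdot>\<^sub>v x) $ i"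
        using i x K J by (simp add: r_def a_def algebra_simps)
    qed (use J K x in simp)
    have "x \<bullet> (P *\<^sub>v (J\<^sub>T *\<^sub>v x)) + r * (x \<bullet> (P *\<^sub>v x)) = x \<bullet> (P *\<^sub>v (K *\<^sub>v x - \<epsilon> \<cdot>\<^sub>v x))"
      unfolding KJ using Pc x Jx
      by (simp add: mult_add_distrib_mat_vec[of _ n n] mult_mat_vec[of _ n n] scalar_prod_add_distrib[of _ n])
    hence "x \<bullet> (P *\<^sub>v (J\<^sub>T *\<^sub>v x)) + r * (x \<bullet> (P *\<^sub>v x)) \<le> 0" using Plyap[OF x] by simp
    thus "x \<bullet> ((transpose_mat J\<^sub>T * P + P * J\<^sub>T) *\<^sub>v x) \<le> x \<bullet> (((- 2 * r) \<cdot>\<^sub>m P - 0 \<cdot>\<^sub>m 1\<^sub>m n) *\<^sub>v x)"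
      unfolding lhs rhs by simp
  qed
  have pd: "p_dominant n J\<^sub>T r p"
    unfolding p_dominant_def using Pc Psym Pin loew by (intro bexI[of _ P] conjI exI[of _ 0]) auto
  show ?thesis using pd sizep sized unfolding r_def M_def by simp
qed

end
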